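(* Let $(\gamma_n)_{n\ge 0}$ be a sequence of positive reals satisfying conditions (C1)–(C7) below, and let $(p_n)_{n\ge0}$ be the associated symmetric orthonormal polynomials. Then for every $\omega\in\mathbb{R}$ the limit $\lim_{n\to\infty}\gamma_n\bigl(p_n^2(\omega)+p_{n+1}^2(\omega)\bigr)$ exists. Moreover, for every $B>0$ there exist constants $m_B, M_B$ with $0<m_B<M_B<\infty$ such that for all $\omega$ with $|\omega|\le B$, \[ m_B\le \lim_{n\to\infty}\gamma_n\bigl(p_n^2(\omega)+p_{n+1}^2(\omega)\bigr)\le M_B, \] and the convergence of this limit is uniform on the set $\{\omega: |\omega|\le B\}$.
   Context: Given positive reals $\gamma_n>0$ ($n\ge 0$), set $\gamma_{-1}=1$, $p_{-1}(\omega)=0$, $p_0(\omega)=1$, and define polynomials by the three-term recurrence $\gamma_n p_{n+1}(\omega)=\omega p_n(\omega)-\gamma_{n-1}p_{n-1}(\omega)$ for $n\ge0$; this is a symmetric positive definite orthonormal polynomial family with recursion coefficients $\gamma_n$. Let $\Delta_n=\gamma_{n+1}-\gamma_n$ and $\Delta^2_n=\Delta_{n+1}-\Delta_n$. The conditions are: (C1) $\gamma_n\to\infty$; (C2) $\Delta_n\to 0$; (C3) $(\gamma_n)$ is almost increasing: there exist $n_0,m_0$ such that $\gamma_{n+m}>\gamma_n$ for all $n\ge n_0$ and all $m\ge m_0$; (C4) $\sum_{j\ge0}1/\gamma_j=\infty$; (C5) there exists $\kappa>1$ with $\sum_{j\ge0}\gamma_j^{-\kappa}<\infty$; (C6) $\sum_{n\ge0}|\Delta_n|/\gamma_n^2<\infty$;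 (C7) $\sum_{n\ge0}|\Delta^2_n|/\gamma_n<\infty$. *)

theory Defs
  imports "HOL-Analysis.Analysis"
begin

text \<open>Orthonormal polynomials from the recurrence
  gamma_n p_{n+1}(w) = w p_n(w) - gamma_{n-1} p_{n-1}(w), with gamma_{-1} = 1,
  p_{-1} = 0, p_0 = 1. The auxiliary function returns the pair (p_n(w), p_{n+1}(w)).\<close>

fun opoly_pair :: "(nat \<Rightarrow> real) \<Rightarrow> real \<Rightarrow> nat \<Rightarrow> real \<times> real" where
  "opoly_pair g w 0 = (1, w / g 0)"
| "opoly_pair g w (Suc n) =
     (let (a, b) = opoly_pair g w n in (b, (w * b - g n * a) / g (Suc n)))"

definition opoly :: "(nat \<Rightarrow> real) \<Rightarrow> nat \<Rightarrow> real \<Rightarrow> real" where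
  "opoly g n w = fst (opoly_pair g w n)"

lemma opoly_0: "opoly g 0 w = 1"
  by (simp add: opoly_def)

lemma opoly_1: "opoly g 1 w = w / g 0"
  by (simp add: opoly_def)

lemma opoly_rec:
  assumes "g (Suc n) \<noteq> 0"
  shows "g (Suc n) * opoly g (Suc (Suc n)) w = w * opoly g (Suc n) w - g n * opoly g n w"
proof -
  have snd: "snd (opoly_pair g w m) = fst (opoly_pair g w (Suc m))" for m
    by (simp add: case_prod_beta)
  show ?thesis using assms
    by (simp add: opoly_def case_prod_beta snd[symmetric])
qed

end

theory Submission
  imports Defs
begin


lemma absmul_le:
  fixes a b A B :: real
  assumes "\<bar>a\<bar> \<le> A" "\<bar>b\<bar> \<le> B"
  shows "\<bar>a*b\<bar> \<le> A*B"
proof -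
  have "\<bar>a*b\<bar> = \<bar>a\<bar>*\<bar>b\<bar>" by (simp add: abs_mult)
  also have "\<dots> \<le> A*B" using assms by (intro mult_mono) auto
  finally show ?thesis .
qed

lemma two_xy: fixes x y :: real shows "2*\<bar>x*y\<bar> \<le> x\<^sup>2 + y\<^sup>2"
proof -
  have "2*\<bar>x\<bar>*\<bar>y\<bar> \<le> \<bar>x\<bar>\<^sup>2 + \<bar>y\<bar>\<^sup>2" by (rule sum_squares_bound)
  thus ?thesis by (simp add: abs_mult)
qed

lemma step_alg:
  fixes g G w x y z h h' :: real
  assumes G: "G > 0" and rel: "G*z = w*y - g*x"
    and h: "h = g*(x\<^sup>2+y\<^sup>2) - w*x*y" and h': "h' = G*(y\<^sup>2+z\<^sup>2) - w*y*z" and hnz: "h \<noteq> 0"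
  shows "h' = h*(1 + (G-g)/G * ((G*y\<^sup>2 - g*x\<^sup>2 + w*x*y)/h))"
proof -
  have "G*h' = G^2*y^2 + (G*z)^2 - w*y*(G*z)" unfolding h' by (simp add: algebra_simps power2_eq_square)
  also have "\<dots> = G^2*y^2 + g^2*x^2 - g*w*x*y" unfolding rel by (simp add: algebra_simps power2_eq_square)
  finally have 1: "G*h' = G^2*y^2 + g^2*x^2 - g*w*x*y" .
  have "G*(h*(1 + (G-g)/G * ((G*y\<^sup>2 - g*x\<^sup>2 + w*x*y)/h))) = G*h + (G-g)*(G*y\<^sup>2 - g*x\<^sup>2 + w*x*y)"
    using G hnz by (simp add: field_simps)
  also have "\<dots> = G^2*y^2 + g^2*x^2 - g*w*x*y" unfolding h by (simp add: algebra_simps power2_eq_square)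
  finally have "G*h' = G*(h*(1 + (G-g)/G * ((G*y\<^sup>2 - g*x\<^sup>2 + w*x*y)/h)))" using 1 by simp
  thus ?thesis using G by simp
qed

lemma step_rho:
  fixes g G w x y z h h' :: real
  assumes h: "h = g*(x\<^sup>2+y\<^sup>2) - w*x*y" and h': "h' = G*(y\<^sup>2+z\<^sup>2) - w*y*z" and hnz: "h \<noteq> 0" "h' \<noteq> 0"
  shows "(1 - 2*g*x\<^sup>2/h) + (1 - 2*G*y\<^sup>2/h') =
     2*(g*G*y\<^sup>2*(z\<^sup>2-x\<^sup>2) - g*w*y^3*z - w*G*x*y*z\<^sup>2 + w\<^sup>2*x*y\<^sup>2*z)/(h*h')"
proof -
  have "h*h' - g*x\<^sup>2*h' - G*y\<^sup>2*h = g*G*y\<^sup>2*(z\<^sup>2-x\<^sup>2) - g*w*y^3*z - w*G*x*y*z\<^sup>2 + w\<^sup>2*x*y\<^sup>2*z"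
    unfolding h h' by (simp add: algebra_simps power2_eq_square power3_eq_cube)
  then show ?thesis using hnz by (simp add: field_simps)
qed

lemma step_G2:
  fixes g G w x y z :: real
  assumes rel: "G*z = w*y - g*x"
  shows "G\<^sup>2*(z\<^sup>2-x\<^sup>2) = w\<^sup>2*y\<^sup>2 - 2*w*g*x*y + (g\<^sup>2-G\<^sup>2)*x\<^sup>2"
proof -
  have "G\<^sup>2*(z\<^sup>2-x\<^sup>2) = (G*z)\<^sup>2 - G\<^sup>2*x\<^sup>2" by (simp add: algebra_simps power2_eq_square)
  also have "\<dots> = w\<^sup>2*y\<^sup>2 - 2*w*g*x*y + (g\<^sup>2-G\<^sup>2)*x\<^sup>2" unfolding rel by (simp add: algebra_simps power2_eq_square)
  finally show ?thesis .
qed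

lemma step_est:
  fixes g G w x y z B :: real
  assumes B: "B > 0" and g: "g \<ge> 4*B + 32" and GG: "\<bar>G - g\<bar> \<le> 1" and w: "\<bar>w\<bar> \<le> B"
    and rel: "G*z = w*y - g*x" and S: "x\<^sup>2+y\<^sup>2 > 0" and S': "y\<^sup>2+z\<^sup>2 > 0"
  defines "h \<equiv> g*(x\<^sup>2+y\<^sup>2) - w*x*y" and "h' \<equiv> G*(y\<^sup>2+z\<^sup>2) - w*y*z"
  shows "h > 0" "h' > 0" "\<bar>1 - 2*g*x\<^sup>2/h\<bar> \<le> 5"
    "\<bar>(1 - 2*g*x\<^sup>2/h) + (1 - 2*G*y\<^sup>2/h')\<bar> \<le> 16*(3*B\<^sup>2+4*B+6)/g"
    "\<bar>ln h' - ln h - (G-g)/G*(1 - 2*g*x\<^sup>2/h)\<bar> \<le> (516 + 4*B)*\<bar>G-g\<bar>/g\<^sup>2"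
    "\<bar>w*x*y\<bar> \<le> B*h/g"
proof -
  define S where "S = x\<^sup>2+y\<^sup>2"
  define S' where "S' = y\<^sup>2+z\<^sup>2"
  have Sp: "S > 0" "S' > 0" using S S' by (auto simp: S_def S'_def)
  have gp: "g > 0" "g \<ge> 32" "B \<le> g/4" using g B by auto
  have Gp: "G \<ge> g/2" "G \<le> 2*g" "G > 0" "B \<le> G" using GG gp by auto
  have x2: "x\<^sup>2 \<le> S" "y\<^sup>2 \<le> S" "y\<^sup>2 \<le> S'" "z\<^sup>2 \<le> S'" by (auto simp: S_def S'_def)
  have xy: "\<bar>x*y\<bar> \<le> S/2" using two_xy[of x y] by (simp add: S_def)
  have yz: "\<bar>y*z\<bar> \<le> S'/2" using two_xy[of y z] by (simp add: S'_def)
  have wxy: "\<bar>w*x*y\<bar> \<le> B*S/2" using absmul_le[OF w xy] by (simp add: mult.assoc)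
  have wyz: "\<bar>w*y*z\<bar> \<le> B*S'/2" using absmul_le[OF w yz] by (simp add: mult.assoc)
  have BS: "B*S \<le> g*S" "B*S' \<le> G*S'" using gp Gp Sp by (auto intro!: mult_right_mono)
  have hS: "h = g*S - w*x*y" by (simp add: h_def S_def)
  have h'S: "h' = G*S' - w*y*z" by (simp add: h'_def S'_def)
  have hlow: "h \<ge> g*S/2" using hS wxy BS using abs_le_D1[OF wxy] by linarith
  have gSp: "g*S > 0" using gp Sp by simp
  have hup: "h \<le> 2*g*S" using hS wxy BS gSp abs_le_D2[OF wxy] by linarith
  have h'low: "h' \<ge> G*S'/2" using h'S wyz BS using abs_le_D1[OF wyz] by linarith
  have hpos: "h > 0" using hlow gSp by linarith
  have GSp: "G*S' > 0" using Gp Sp by simp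
  have h'pos: "h' > 0" using h'low GSp by linarith
  show "h > 0" "h' > 0" by fact+
  show "\<bar>w*x*y\<bar> \<le> B*h/g"
  proof -
    have "S/2 \<le> h/g" using hlow gp(1) by (simp add: field_simps)
    hence "B*(S/2) \<le> B*(h/g)" by (rule mult_left_mono) (use B in auto)
    moreover have "B*S/2 = B*(S/2)" "B*h/g = B*(h/g)" by simp_all
    ultimately show ?thesis using wxy by linarith
  qed
  have rho: "0 \<le> 2*g*x\<^sup>2/h \<and> 2*g*x\<^sup>2/h \<le> 4"
  proof
    show "0 \<le> 2*g*x\<^sup>2/h" using gp hpos by simp
    have "2*g*x\<^sup>2 \<le> 2*g*S" using x2 gp by simp
    also have "\<dots> \<le> 4*h" using hlow by linarith
    finally show "2*g*x\<^sup>2/h \<le> 4" using hpos by (simp add: divide_le_eq)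
  qed
  then show "\<bar>1 - 2*g*x\<^sup>2/h\<bar> \<le> 5" by auto
  have hE: "h = g*(x\<^sup>2+y\<^sup>2) - w*x*y" by (simp add: h_def)
  have h'E: "h' = G*(y\<^sup>2+z\<^sup>2) - w*y*z" by (simp add: h'_def)
  define P where "P = S*S'"
  have Pp: "P > 0" using Sp by (simp add: P_def)
  have w2: "w\<^sup>2 \<le> B\<^sup>2" using power_mono[OF w, of 2] by simp
  have gG: "g/G \<le> 2" "0 \<le> g/G" using Gp gp by (auto simp: field_simps)
  have inner: "\<bar>w\<^sup>2*y\<^sup>2 - 2*w*g*x*y + (g\<^sup>2-G\<^sup>2)*x\<^sup>2\<bar> \<le> (B\<^sup>2 + B*g + 3*g)*S"
  proof -
    have i1: "\<bar>w\<^sup>2*y\<^sup>2\<bar> \<le> B\<^sup>2*S" by (rule absmul_le) (use w2 x2 in auto)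
    have i2: "\<bar>(2*g)*(w*(x*y))\<bar> \<le> (2*g)*(B*(S/2))"
      by (rule absmul_le) (use gp absmul_le[OF w xy] in auto)
    have i3: "\<bar>((g-G)*(g+G))*x\<^sup>2\<bar> \<le> (1*(3*g))*S"
      by (rule absmul_le, rule absmul_le) (use GG gp Gp x2 in \<open>auto simp: abs_minus_commute\<close>)
    have e: "w\<^sup>2*y\<^sup>2 - 2*w*g*x*y + (g\<^sup>2-G\<^sup>2)*x\<^sup>2 = w\<^sup>2*y\<^sup>2 - (2*g)*(w*(x*y)) + ((g-G)*(g+G))*x\<^sup>2"
      by (simp add: algebra_simps power2_eq_square)
    have "\<bar>w\<^sup>2*y\<^sup>2 - (2*g)*(w*(x*y)) + ((g-G)*(g+G))*x\<^sup>2\<bar> \<le> B\<^sup>2*S + (2*g)*(B*(S/2)) + (1*(3*g))*S"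
      using i1 i2 i3 by (smt (verit, best) abs_triangle_ineq abs_triangle_ineq4)
    also have "\<dots> = (B\<^sup>2 + B*g + 3*g)*S" by (simp add: algebra_simps)
    finally show ?thesis by (simp only: e)
  qed
  have T1: "\<bar>g*G*y\<^sup>2*(z\<^sup>2-x\<^sup>2)\<bar> \<le> (2*B\<^sup>2 + 2*B*g + 6*g)*P"
  proof -
    have "g*G*y\<^sup>2*(z\<^sup>2-x\<^sup>2) = ((g/G)*y\<^sup>2)*(G\<^sup>2*(z\<^sup>2-x\<^sup>2))" using Gp by (simp add: field_simps power2_eq_square)
    also have "\<dots> = ((g/G)*y\<^sup>2)*(w\<^sup>2*y\<^sup>2 - 2*w*g*x*y + (g\<^sup>2-G\<^sup>2)*x\<^sup>2)" using step_G2[OF rel] by simp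
    finally have "\<bar>g*G*y\<^sup>2*(z\<^sup>2-x\<^sup>2)\<bar> \<le> (2*S')*((B\<^sup>2 + B*g + 3*g)*S)"
      using absmul_le[OF absmul_le[of "g/G" 2 "y\<^sup>2" S'] inner] gG x2 by simp
    also have "\<dots> = (2*B\<^sup>2 + 2*B*g + 6*g)*P" by (simp add: P_def algebra_simps)
    finally show ?thesis .
  qed
  have T2: "\<bar>g*w*y^3*z\<bar> \<le> (g*B/2)*P"
  proof -
    have b: "\<bar>(g*y\<^sup>2)*(w*(y*z))\<bar> \<le> (g*S)*(B*(S'/2))"
      by (rule absmul_le) (use gp x2 absmul_le[OF w yz] in \<open>auto simp: abs_mult\<close>)
    have e1: "g*w*y^3*z = (g*y\<^sup>2)*(w*(y*z))" by (simp add: algebra_simps power2_eq_square power3_eq_cube)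
    have e2: "(g*S)*(B*(S'/2)) = (g*B/2)*P" by (simp add: P_def algebra_simps)
    show ?thesis unfolding e1 using b[unfolded e2] .
  qed
  have T3: "\<bar>w*G*x*y*z\<^sup>2\<bar> \<le> (B*g)*P"
  proof -
    have b: "\<bar>(w*G)*((x*y)*z\<^sup>2)\<bar> \<le> (B*(2*g))*((S/2)*S')"
      by (rule absmul_le, rule absmul_le, use w Gp in simp, use Gp in simp, rule absmul_le)
        (use xy x2 in auto)
 have e1: "w*G*x*y*z\<^sup>2 = (w*G)*((x*y)*z\<^sup>2)" by (simp add: algebra_simps)
    have e2: "(B*(2*g))*((S/2)*S') = (B*g)*P" by (simp add: P_def algebra_simps)
    show ?thesis unfolding e1 using b[unfolded e2] .
  qed
  have T4: "\<bar>w\<^sup>2*x*y\<^sup>2*z\<bar> \<le> (B\<^sup>2/4)*P"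
  proof -
    have b: "\<bar>w\<^sup>2*((x*y)*(y*z))\<bar> \<le> B\<^sup>2*((S/2)*(S'/2))"
      by (rule absmul_le, use w2 in simp, rule absmul_le) (use xy yz in auto)
    have e1: "w\<^sup>2*x*y\<^sup>2*z = w\<^sup>2*((x*y)*(y*z))" by (simp add: algebra_simps power2_eq_square)
    have e2: "B\<^sup>2*((S/2)*(S'/2)) = (B\<^sup>2/4)*P" by (simp add: P_def algebra_simps)
    show ?thesis unfolding e1 using b[unfolded e2] .
  qed
  define K0 where "K0 = 3*B\<^sup>2+4*B+6"
  define Num where "Num = g*G*y\<^sup>2*(z\<^sup>2-x\<^sup>2) - g*w*y^3*z - w*G*x*y*z\<^sup>2 + w\<^sup>2*x*y\<^sup>2*z"
  have Numb: "\<bar>Num\<bar> \<le> g*K0*P"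
  proof -
    have "\<bar>Num\<bar> \<le> (2*B\<^sup>2 + 2*B*g + 6*g)*P + (g*B/2)*P + (B*g)*P + (B\<^sup>2/4)*P"
      unfolding Num_def using T1 T2 T3 T4 by (smt (verit, best) abs_triangle_ineq abs_triangle_ineq4)
    also have "\<dots> = (2*B\<^sup>2 + B\<^sup>2/4 + (7/2)*(B*g) + 6*g)*P" by (simp add: algebra_simps)
    also have "\<dots> \<le> g*K0*P"
    proof (rule mult_right_mono)
      have "B\<^sup>2 \<le> B\<^sup>2*g" using gp by (simp add: mult_le_cancel_left1)
      moreover have "0 \<le> B*g" using B gp by simp
      moreover have "g*K0 - (2*B\<^sup>2 + B\<^sup>2/4 + (7/2)*(B*g) + 6*g) = (3*(B\<^sup>2*g) - 9*B\<^sup>2/4) + (B*g)/2"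
        unfolding K0_def by (simp add: algebra_simps)
      moreover have "0 \<le> B\<^sup>2" by simp
      ultimately show "2*B\<^sup>2 + B\<^sup>2/4 + (7/2)*(B*g) + 6*g \<le> g*K0" by linarith
    qed (use Pp in simp)
    finally show ?thesis .
  qed
  have hh: "g\<^sup>2*P/8 \<le> h*h'"
  proof -
    have "(g*S/2)*(G*S'/2) \<le> h*h'" by (rule mult_mono) (use hlow h'low hpos gSp GSp in auto)
    moreover have "(g*S/2)*((g/2)*S'/2) \<le> (g*S/2)*(G*S'/2)"
      by (rule mult_left_mono) (use Gp Sp gSp in \<open>auto intro: mult_right_mono\<close>)
    moreover have "(g*S/2)*((g/2)*S'/2) = g\<^sup>2*P/8" by (simp add: P_def power2_eq_square)
    ultimately show ?thesis by linarith
  qed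
  show "\<bar>(1 - 2*g*x\<^sup>2/h) + (1 - 2*G*y\<^sup>2/h')\<bar> \<le> 16*(3*B\<^sup>2+4*B+6)/g"
  proof -
    have "(1 - 2*g*x\<^sup>2/h) + (1 - 2*G*y\<^sup>2/h') = 2*Num/(h*h')"
      unfolding Num_def by (rule step_rho[OF hE h'E]) (use hpos h'pos in auto)
    hence "\<bar>(1 - 2*g*x\<^sup>2/h) + (1 - 2*G*y\<^sup>2/h')\<bar> = 2*\<bar>Num\<bar>/(h*h')" using hpos h'pos by simp
    also have "\<dots> \<le> 2*(g*K0*P)/(h*h')" by (rule divide_right_mono) (use Numb hpos h'pos in auto)
    also have "\<dots> \<le> 2*(g*K0*P)/(g\<^sup>2*P/8)"
      by (rule divide_left_mono[OF hh]) (use gp Pp K0_def B hh hpos h'pos in \<open>auto intro!: mult_pos_pos\<close>)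
    also have "\<dots> = 16*K0/g" using gp Pp by (simp add: field_simps power2_eq_square)
    finally show ?thesis by (simp add: K0_def)
  qed
  define N where "N = G*y\<^sup>2 - g*x\<^sup>2 + w*x*y"
  define a where "a = (G-g)/G"
  define t where "t = a*(N/h)"
  have Nb: "\<bar>N\<bar> \<le> 4*g*S"
  proof -
    have "G*y\<^sup>2 \<le> (2*g)*S" by (rule mult_mono) (use Gp x2 gp in auto)
    moreover have "0 \<le> G*y\<^sup>2" using Gp by simp
    moreover have "g*x\<^sup>2 \<le> g*S" using x2 gp by simp
    moreover have "0 \<le> g*x\<^sup>2" using gp by simp
    moreover have "B*S/2 \<le> g*S" using BS gSp by linarith
    moreover have "\<bar>N\<bar> \<le> \<bar>G*y\<^sup>2 - g*x\<^sup>2\<bar> + \<bar>w*x*y\<bar>" unfolding N_def by (rule abs_triangle_ineq)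
    moreover have "\<bar>G*y\<^sup>2 - g*x\<^sup>2\<bar> \<le> \<bar>G*y\<^sup>2\<bar> + \<bar>g*x\<^sup>2\<bar>" by (rule abs_triangle_ineq4)
    ultimately show ?thesis using wxy by linarith
  qed
  have Nh: "\<bar>N/h\<bar> \<le> 8"
  proof -
    have "\<bar>N/h\<bar> = \<bar>N\<bar>/h" using hpos by simp
    also have "\<dots> \<le> (8*h)/h" by (rule divide_right_mono) (use Nb hlow hpos in auto)
    finally show ?thesis using hpos by simp
  qed
  have ab: "\<bar>a\<bar> \<le> 2*\<bar>G-g\<bar>/g"
  proof -
    have "\<bar>a\<bar> = \<bar>G-g\<bar>/G" using Gp by (simp add: a_def)
    also have "\<dots> \<le> \<bar>G-g\<bar>/(g/2)" by (rule divide_left_mono) (use Gp gp in auto)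
    finally show ?thesis by (simp add: mult.commute)
  qed
  have tb: "\<bar>t\<bar> \<le> 16*\<bar>G-g\<bar>/g" using absmul_le[OF ab Nh] by (simp add: t_def)
  have tb2: "\<bar>t\<bar> \<le> 1/2"
  proof -
    have "16*\<bar>G-g\<bar>/g \<le> 16*1/32" by (rule frac_le) (use GG gp in auto)
    thus ?thesis using tb by simp
  qed
  have h'eq: "h' = h*(1+t)" unfolding t_def a_def N_def by (rule step_alg[OF Gp(3) rel hE h'E]) (use hpos in simp)
  have t1: "1 + t > 0" using tb2 by (auto simp: abs_le_iff)
  have lneq: "ln h' - ln h = ln (1+t)" using h'eq hpos t1 by (simp add: ln_mult)
  have Nrho: "N/h - (1 - 2*g*x\<^sup>2/h) = ((G-g)*y\<^sup>2 + 2*(w*x*y))/h"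
  proof -
    have "N - (h - 2*g*x\<^sup>2) = (G-g)*y\<^sup>2 + 2*(w*x*y)" unfolding N_def hE by (simp add: algebra_simps)
    moreover have "N/h - (1 - 2*g*x\<^sup>2/h) = (N - (h - 2*g*x\<^sup>2))/h" using hpos by (simp add: diff_divide_distrib)
    ultimately show ?thesis by simp
  qed
  have Er: "\<bar>N/h - (1 - 2*g*x\<^sup>2/h)\<bar> \<le> 2*(1+B)/g"
  proof -
    have "\<bar>(G-g)*y\<^sup>2\<bar> \<le> 1*S" by (rule absmul_le) (use GG x2 in auto)
    moreover have "\<bar>2*(w*x*y)\<bar> \<le> B*S" using wxy by simp
    moreover have "\<bar>(G-g)*y\<^sup>2 + 2*(w*x*y)\<bar> \<le> \<bar>(G-g)*y\<^sup>2\<bar> + \<bar>2*(w*x*y)\<bar>" by (rule abs_triangle_ineq)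
    moreover have "(1+B)*S = 1*S + B*S" by (simp add: algebra_simps)
    ultimately have A: "\<bar>(G-g)*y\<^sup>2 + 2*(w*x*y)\<bar> \<le> (1+B)*S" by linarith
    have "\<bar>((G-g)*y\<^sup>2 + 2*(w*x*y))/h\<bar> = \<bar>(G-g)*y\<^sup>2 + 2*(w*x*y)\<bar>/h" using hpos by simp
    also have "\<dots> \<le> (1+B)*S/h" by (rule divide_right_mono[OF A]) (use hpos in simp)
    also have "\<dots> \<le> (1+B)*S/(g*S/2)" by (rule divide_left_mono[OF hlow]) (use B gSp hpos Sp in auto)
    also have "\<dots> = 2*(1+B)/g" using Sp gp by (simp add: field_simps)
    finally show ?thesis using Nrho by simp
  qed
  show "\<bar>ln h' - ln h - (G-g)/G*(1 - 2*g*x\<^sup>2/h)\<bar> \<le> (516 + 4*B)*\<bar>G-g\<bar>/g\<^sup>2"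
  proof -
    have split: "ln h' - ln h - (G-g)/G*(1 - 2*g*x\<^sup>2/h) = (ln (1+t) - t) + a*(N/h - (1 - 2*g*x\<^sup>2/h))"
      using lneq unfolding t_def by (simp add: a_def algebra_simps)
    have l1: "\<bar>ln (1+t) - t\<bar> \<le> 512*\<bar>G-g\<bar>/g\<^sup>2"
    proof -
      have A: "\<bar>ln (1+t) - t\<bar> \<le> 2*t\<^sup>2" by (rule abs_ln_one_plus_x_minus_x_bound[OF tb2])
      have "t\<^sup>2 \<le> (16*\<bar>G-g\<bar>/g)\<^sup>2" using power_mono[OF tb, of 2] by simp
      also have "(16*\<bar>G-g\<bar>/g)\<^sup>2 = 256*(\<bar>G-g\<bar>*\<bar>G-g\<bar>)/g\<^sup>2" by (simp add: power2_eq_square)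
      also have "\<dots> \<le> 256*\<bar>G-g\<bar>/g\<^sup>2"
      proof (rule divide_right_mono)
        have "\<bar>G-g\<bar>*\<bar>G-g\<bar> \<le> 1*\<bar>G-g\<bar>" by (rule mult_right_mono[OF GG]) simp
        thus "256*(\<bar>G-g\<bar>*\<bar>G-g\<bar>) \<le> 256*\<bar>G-g\<bar>" by linarith
      qed simp
      finally have "t\<^sup>2 \<le> 256*\<bar>G-g\<bar>/g\<^sup>2" .
      thus ?thesis using A by linarith
    qed
    have l2: "\<bar>a*(N/h - (1 - 2*g*x\<^sup>2/h))\<bar> \<le> (2*\<bar>G-g\<bar>/g)*(2*(1+B)/g)" by (rule absmul_le[OF ab Er])
    have "(2*\<bar>G-g\<bar>/g)*(2*(1+B)/g) = (4 + 4*B)*\<bar>G-g\<bar>/g\<^sup>2" by (simp add: power2_eq_square algebra_simps)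
    hence "\<bar>ln h' - ln h - (G-g)/G*(1 - 2*g*x\<^sup>2/h)\<bar> \<le> 512*\<bar>G-g\<bar>/g\<^sup>2 + (4 + 4*B)*\<bar>G-g\<bar>/g\<^sup>2"
      unfolding split using l1 l2 abs_triangle_ineq[of "ln (1+t) - t" "a*(N/h - (1 - 2*g*x\<^sup>2/h))"] by linarith
    also have "\<dots> = (516 + 4*B)*\<bar>G-g\<bar>/g\<^sup>2" by (simp add: add_divide_distrib[symmetric] algebra_simps)
    finally show ?thesis .
  qed
qed

lemma opoly_Suc2:
  assumes pos: "\<And>n. (\<gamma>::nat\<Rightarrow>real) n > 0"
  shows "opoly \<gamma> (Suc (Suc n)) w = (w * opoly \<gamma> (Suc n) w - \<gamma> n * opoly \<gamma> n w) / \<gamma> (Suc n)"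
proof -
  have "\<gamma> (Suc n) \<noteq> 0" using pos[of "Suc n"] by simp
  from opoly_rec[of \<gamma> n w, OF this] show ?thesis using pos[of "Suc n"] by (simp add: eq_divide_eq mult.commute)
qed

lemma opoly_cont:
  assumes pos: "\<And>n. (\<gamma>::nat\<Rightarrow>real) n > 0"
  shows "continuous_on UNIV (opoly \<gamma> n) \<and> continuous_on UNIV (opoly \<gamma> (Suc n))"
proof (induction n)
  case 0
  have "opoly \<gamma> 0 = (\<lambda>w. 1)" by (rule ext) (simp add: opoly_0)
  moreover have "opoly \<gamma> 1 = (\<lambda>w. w / \<gamma> 0)" by (rule ext) (rule opoly_1)
  ultimately show ?case using pos[of 0] by (auto intro!: continuous_intros)
next
  case (Suc n)
  have "opoly \<gamma> (Suc (Suc n)) = (\<lambda>w. (w * opoly \<gamma> (Suc n) w - \<gamma> n * opoly \<gamma> n w) / \<gamma> (Suc n))"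
    by (rule ext) (rule opoly_Suc2[OF pos])
  with Suc show ?case using pos[of "Suc n"] by (auto intro!: continuous_intros)
qed

lemma opoly_nonzero:
  assumes pos: "\<And>n. (\<gamma>::nat\<Rightarrow>real) n > 0"
  shows "opoly \<gamma> n w \<noteq> 0 \<or> opoly \<gamma> (Suc n) w \<noteq> 0"
proof (induction n)
  case 0 show ?case by (simp add: opoly_0)
next
  case (Suc n)
  show ?case
  proof (rule ccontr)
    assume "\<not> ?case"
    hence z: "opoly \<gamma> (Suc n) w = 0" "opoly \<gamma> (Suc (Suc n)) w = 0" by auto
    have "\<gamma> (Suc n) \<noteq> 0" using pos[of "Suc n"] by simp
    from opoly_rec[of \<gamma> n w, OF this] z have "\<gamma> n * opoly \<gamma> n w = 0" by simp
    hence "opoly \<gamma> n w = 0" using pos[of n] by simp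
    with Suc z show False by simp
  qed
qed

lemma sq_pos: "a \<noteq> 0 \<or> b \<noteq> 0 \<Longrightarrow> (a::real)\<^sup>2 + b\<^sup>2 > 0"
  by (simp add: sum_power2_gt_zero_iff)

lemma step_opoly:
  fixes \<gamma> :: "nat \<Rightarrow> real" and B \<omega> :: real
  assumes pos: "\<And>n. \<gamma> n > 0" and B: "B > 0" and g: "\<gamma> n \<ge> 4*B + 32"
    and GG: "\<bar>\<gamma> (Suc n) - \<gamma> n\<bar> \<le> 1" and w: "\<bar>\<omega>\<bar> \<le> B"
  defines "H \<equiv> \<lambda>n. \<gamma> n * ((opoly \<gamma> n \<omega>)\<^sup>2 + (opoly \<gamma> (Suc n) \<omega>)\<^sup>2) - \<omega> * opoly \<gamma> n \<omega> * opoly \<gamma> (Suc n) \<omega>"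
  shows "H n > 0" "\<bar>1 - 2*\<gamma> n*(opoly \<gamma> n \<omega>)\<^sup>2/H n\<bar> \<le> 5"
    "\<bar>(1 - 2*\<gamma> n*(opoly \<gamma> n \<omega>)\<^sup>2/H n) + (1 - 2*\<gamma> (Suc n)*(opoly \<gamma> (Suc n) \<omega>)\<^sup>2/H (Suc n))\<bar>
       \<le> 16*(3*B\<^sup>2+4*B+6)/\<gamma> n"
    "\<bar>ln (H (Suc n)) - ln (H n) - (\<gamma> (Suc n) - \<gamma> n)/\<gamma> (Suc n)*(1 - 2*\<gamma> n*(opoly \<gamma> n \<omega>)\<^sup>2/H n)\<bar>
       \<le> (516 + 4*B)*\<bar>\<gamma> (Suc n) - \<gamma> n\<bar>/(\<gamma> n)\<^sup>2"
    "\<bar>\<omega> * opoly \<gamma> n \<omega> * opoly \<gamma> (Suc n) \<omega>\<bar> \<le> B * H n / \<gamma> n"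
proof -
  have rel: "\<gamma> (Suc n) * opoly \<gamma> (Suc (Suc n)) \<omega> = \<omega> * opoly \<gamma> (Suc n) \<omega> - \<gamma> n * opoly \<gamma> n \<omega>"
    by (rule opoly_rec[of \<gamma> n]) (use pos[of "Suc n"] in simp)
  have S: "(opoly \<gamma> n \<omega>)\<^sup>2 + (opoly \<gamma> (Suc n) \<omega>)\<^sup>2 > 0" by (rule sq_pos[OF opoly_nonzero[OF pos]])
  have S': "(opoly \<gamma> (Suc n) \<omega>)\<^sup>2 + (opoly \<gamma> (Suc (Suc n)) \<omega>)\<^sup>2 > 0" by (rule sq_pos[OF opoly_nonzero[OF pos]])
  note E = step_est[OF B g GG w rel S S']
  show "H n > 0" "\<bar>1 - 2*\<gamma> n*(opoly \<gamma> n \<omega>)\<^sup>2/H n\<bar> \<le> 5"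
    "\<bar>(1 - 2*\<gamma> n*(opoly \<gamma> n \<omega>)\<^sup>2/H n) + (1 - 2*\<gamma> (Suc n)*(opoly \<gamma> (Suc n) \<omega>)\<^sup>2/H (Suc n))\<bar>
       \<le> 16*(3*B\<^sup>2+4*B+6)/\<gamma> n"
    "\<bar>ln (H (Suc n)) - ln (H n) - (\<gamma> (Suc n) - \<gamma> n)/\<gamma> (Suc n)*(1 - 2*\<gamma> n*(opoly \<gamma> n \<omega>)\<^sup>2/H n)\<bar>
       \<le> (516 + 4*B)*\<bar>\<gamma> (Suc n) - \<gamma> n\<bar>/(\<gamma> n)\<^sup>2"
    "\<bar>\<omega> * opoly \<gamma> n \<omega> * opoly \<gamma> (Suc n) \<omega>\<bar> \<le> B * H n / \<gamma> n"
    using E unfolding H_def by simp_all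
qed




lemma filterlim_shift_iff: "filterlim (\<lambda>n. f (n + k)) F sequentially \<longleftrightarrow> filterlim f F sequentially"
proof -
  have *: "eventually (\<lambda>x. P (f (x + k))) sequentially \<longleftrightarrow> eventually (\<lambda>x. P (f x)) sequentially" for P
    using eventually_sequentially_seg[of "\<lambda>x. P (f x)" k] by simp
  show ?thesis unfolding filterlim_iff by (simp add: *)
qed

lemma lim0_unif:
  assumes "(c::nat\<Rightarrow>real) \<longlonglongrightarrow> 0"
  shows "uniform_limit S (\<lambda>n x. c n) (\<lambda>x. 0) sequentially"
  unfolding uniform_limit_sequentially_iff
proof (intro allI impI)
  fix e :: real assume "e > 0"
  with assms obtain N where "\<forall>n\<ge>N. norm (c n - 0) < e" unfolding LIMSEQ_iff by blast
  thus "\<exists>N. \<forall>n\<ge>N. \<forall>x\<in>S. dist (c n) 0 < e" by (auto simp: dist_real_def)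
qed

lemma lin_bound:
  fixes X Y P Q L0 mu md K0 :: real
  assumes "\<bar>X\<bar> \<le> mu" "\<bar>Y\<bar> \<le> md" "\<bar>P\<bar> \<le> 1*5" "\<bar>Q\<bar> \<le> 1*5" "\<bar>L0\<bar> \<le> K0"
  shows "\<bar>L0 + (X + P - Q)/2 + Y\<bar> \<le> K0 + (mu+10)/2 + md"
proof -
  from assms have "X \<le> mu" "-X \<le> mu" "Y \<le> md" "-Y \<le> md" "P \<le> 5" "-P \<le> 5" "Q \<le> 5" "-Q \<le> 5" "L0 \<le> K0" "-L0 \<le> K0"
    by (simp_all add: abs_le_iff)
  hence "L0 + (X + P - Q)/2 + Y \<le> K0 + (mu+10)/2 + md" by (simp add: field_simps)
  moreover have "-(L0 + (X + P - Q)/2 + Y) \<le> K0 + (mu+10)/2 + md" using \<open>-X \<le> mu\<close> \<open>-Y \<le> md\<close> \<open>-P \<le> 5\<close> \<open>Q \<le> 5\<close> \<open>-L0 \<le> K0\<close> by (simp add: field_simps)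
  ultimately show ?thesis by (simp only: abs_le_iff)
qed

lemma abel2:
  fixes A R :: "nat \<Rightarrow> real"
  shows "2 * (\<Sum>k<n. A k * R k) = (\<Sum>k<n. A k * (R k + R (Suc k)) - (A k - A (Suc k)) * R (Suc k)) + A 0 * R 0 - A n * R n"
  by (induction n) (auto simp: algebra_simps)

lemma main_B:
  fixes \<gamma> :: "nat \<Rightarrow> real" and B :: real
  assumes pos: "\<And>n. \<gamma> n > 0" and C1: "filterlim \<gamma> at_top sequentially"
    and C2: "(\<lambda>n. \<gamma> (Suc n) - \<gamma> n) \<longlonglongrightarrow> 0"
    and C6: "summable (\<lambda>n. \<bar>\<gamma> (Suc n) - \<gamma> n\<bar> / (\<gamma> n)\<^sup>2)"
    and C7: "summable (\<lambda>n. \<bar>(\<gamma> (n + 2) - \<gamma> (n + 1)) - (\<gamma> (n + 1) - \<gamma> n)\<bar> / \<gamma> n)"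
    and B: "B > 0"
  shows "\<exists>\<Phi> K. uniform_limit {\<omega>. \<bar>\<omega>\<bar> \<le> B} (\<lambda>n \<omega>. \<gamma> n * ((opoly \<gamma> n \<omega>)\<^sup>2 + (opoly \<gamma> (Suc n) \<omega>)\<^sup>2)) \<Phi> sequentially
     \<and> (\<forall>\<omega>. \<bar>\<omega>\<bar> \<le> B \<longrightarrow> exp (-K) \<le> \<Phi> \<omega> \<and> \<Phi> \<omega> \<le> exp K)"
proof -
  define \<Omega> where "\<Omega> = {\<omega>::real. \<bar>\<omega>\<bar> \<le> B}"
  have ev1: "eventually (\<lambda>n. \<gamma> n \<ge> 4*B+32) sequentially" using C1 by (simp add: filterlim_at_top)
  have "eventually (\<lambda>n. dist (\<gamma> (Suc n) - \<gamma> n) 0 < 1) sequentially" using tendstoD[OF C2, of 1] by simp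
  hence ev2: "eventually (\<lambda>n. \<bar>\<gamma> (Suc n) - \<gamma> n\<bar> \<le> 1) sequentially"
    by (rule eventually_mono) (simp add: dist_real_def)
  obtain N0 where N0: "\<And>n. n \<ge> N0 \<Longrightarrow> \<gamma> n \<ge> 4*B+32 \<and> \<bar>\<gamma> (Suc n) - \<gamma> n\<bar> \<le> 1"
    using eventually_conj[OF ev1 ev2] unfolding eventually_sequentially by blast
  define h where "h = (\<lambda>n \<omega>. \<gamma> n * ((opoly \<gamma> n \<omega>)\<^sup>2 + (opoly \<gamma> (Suc n) \<omega>)\<^sup>2) - \<omega> * opoly \<gamma> n \<omega> * opoly \<gamma> (Suc n) \<omega>)"
  define \<rho> where "\<rho> = (\<lambda>n \<omega>. 1 - 2*\<gamma> n*(opoly \<gamma> n \<omega>)\<^sup>2/h n \<omega>)"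
  define a where "a = (\<lambda>n. (\<gamma> (Suc n) - \<gamma> n)/\<gamma> (Suc n))"
  define c where "c = (\<lambda>n. \<bar>\<gamma> (Suc n) - \<gamma> n\<bar> / (\<gamma> n)\<^sup>2)"
  define d2 where "d2 = (\<lambda>n. \<bar>(\<gamma> (n + 2) - \<gamma> (n + 1)) - (\<gamma> (n + 1) - \<gamma> n)\<bar> / \<gamma> n)"
  define K1 where "K1 = 16*(3*B\<^sup>2+4*B+6)"
  define CD where "CD = 516 + 4*B"
  have step: "h n \<omega> > 0 \<and> \<bar>\<rho> n \<omega>\<bar> \<le> 5 \<and> \<bar>\<rho> n \<omega> + \<rho> (Suc n) \<omega>\<bar> \<le> K1/\<gamma> n
      \<and> \<bar>ln (h (Suc n) \<omega>) - ln (h n \<omega>) - a n * \<rho> n \<omega>\<bar> \<le> CD * c n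
      \<and> \<bar>\<omega> * opoly \<gamma> n \<omega> * opoly \<gamma> (Suc n) \<omega>\<bar> \<le> B * h n \<omega> / \<gamma> n"
    if n: "n \<ge> N0" and w: "\<omega> \<in> \<Omega>" for n \<omega>
  proof -
    from w have w': "\<bar>\<omega>\<bar> \<le> B" by (simp add: \<Omega>_def)
    note S = step_opoly[OF pos B conjunct1[OF N0[OF n]] conjunct2[OF N0[OF n]] w']
    show ?thesis using S unfolding h_def \<rho>_def a_def c_def K1_def CD_def by simp
  qed
  have cs: "summable c" using C6 by (simp add: c_def)
  have d2s: "summable d2" using C7 by (simp add: d2_def)
  have ab: "\<bar>a n\<bar> \<le> 2 * \<bar>\<gamma> (Suc n) - \<gamma> n\<bar> / \<gamma> n \<and> \<bar>a n\<bar> \<le> 1" if n: "n \<ge> N0" for n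
  proof -
    note N = N0[OF n]
    have g: "\<gamma> n \<ge> 32" using N B by linarith
    have G: "\<gamma> (Suc n) \<ge> \<gamma> n / 2" using N g by (auto simp: abs_le_iff)
    have "\<bar>a n\<bar> = \<bar>\<gamma> (Suc n) - \<gamma> n\<bar> / \<gamma> (Suc n)" using pos[of "Suc n"] by (simp add: a_def)
    also have "\<dots> \<le> \<bar>\<gamma> (Suc n) - \<gamma> n\<bar> / (\<gamma> n / 2)" by (rule divide_left_mono) (use G g pos in auto)
    finally have 1: "\<bar>a n\<bar> \<le> 2 * \<bar>\<gamma> (Suc n) - \<gamma> n\<bar> / \<gamma> n" by (simp add: mult.commute)
    have "2 * \<bar>\<gamma> (Suc n) - \<gamma> n\<bar> / \<gamma> n \<le> 2 * 1 / 32" by (rule frac_le) (use N g in auto)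
    with 1 show ?thesis by simp
  qed
  have adiff: "\<bar>a n - a (Suc n)\<bar> \<le> 2 * d2 n + 2 * c (Suc n)" if n: "n \<ge> N0" for n
  proof -
    note N = N0[OF n]
    have n1: "Suc n \<ge> N0" using n by simp
    note N' = N0[OF n1]
    define g where "g = \<gamma> n"
    define G where "G = \<gamma> (Suc n)"
    define G2 where "G2 = \<gamma> (Suc (Suc n))"
    have g: "g \<ge> 32" using N B by (simp add: g_def)
    have G: "G \<ge> g / 2" "G \<ge> 32" using N N' B g by (auto simp: abs_le_iff g_def G_def)
    have G2: "G2 \<ge> G / 2" "G2 > 0" using N' G by (auto simp: abs_le_iff G_def G2_def)
    define D1 where "D1 = G - g"
    define D2 where "D2 = G2 - G"
    have D2b: "\<bar>D2\<bar> \<le> 1" using N' by (simp add: D2_def G_def G2_def)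
    have eq: "a n - a (Suc n) = -(D2 - D1)/G + (D2*D2)/(G*G2)"
      using G G2 unfolding a_def D1_def D2_def G_def G2_def g_def by (simp add: field_simps)
    have d2eq: "d2 n = \<bar>D2 - D1\<bar> / g" by (simp add: d2_def D1_def D2_def G_def G2_def g_def numeral_2_eq_2)
    have ceq: "c (Suc n) = \<bar>D2\<bar> / G\<^sup>2" by (simp add: c_def D2_def G_def G2_def)
    have t1: "\<bar>-(D2 - D1)/G\<bar> \<le> 2 * d2 n"
    proof -
      have "\<bar>-(D2 - D1)/G\<bar> = \<bar>D2 - D1\<bar>/G" using G by simp
      also have "\<dots> \<le> \<bar>D2 - D1\<bar>/(g/2)" by (rule divide_left_mono) (use G g in auto)
      also have "\<bar>D2 - D1\<bar>/(g/2) = 2 * d2 n" unfolding d2eq by simp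
      finally show ?thesis .
    qed
    have t2: "\<bar>(D2*D2)/(G*G2)\<bar> \<le> 2 * c (Suc n)"
    proof -
      have "\<bar>(D2*D2)/(G*G2)\<bar> = (\<bar>D2\<bar>*\<bar>D2\<bar>)/(G*G2)" using G G2 by (simp add: abs_mult)
      also have "\<dots> \<le> \<bar>D2\<bar>/(G*G2)" by (rule divide_right_mono) (use mult_right_mono[OF D2b, of "\<bar>D2\<bar>"] G G2 in auto)
      also have "\<dots> \<le> \<bar>D2\<bar>/(G*(G/2))" by (rule divide_left_mono) (use G G2 in \<open>auto intro!: mult_left_mono\<close>)
      also have "\<dots> = 2 * c (Suc n)" using G by (simp add: ceq power2_eq_square)
      finally show ?thesis .
    qed
    show ?thesis unfolding eq by (rule order_trans[OF abs_triangle_ineq add_mono[OF t1 t2]])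
  qed
  define A where "A = (\<lambda>k. a (k + N0))"
  define R where "R = (\<lambda>k \<omega>. \<rho> (k + N0) \<omega>)"
  define L where "L = (\<lambda>k \<omega>. ln (h (k + N0) \<omega>))"
  define D where "D = (\<lambda>k \<omega>. L (Suc k) \<omega> - L k \<omega> - A k * R k \<omega>)"
  define U where "U = (\<lambda>k \<omega>. A k * (R k \<omega> + R (Suc k) \<omega>) - (A k - A (Suc k)) * R (Suc k) \<omega>)"
  define MD where "MD = (\<lambda>k. CD * c (k + N0))"
  define MU where "MU = (\<lambda>k. 2*K1*c (k + N0) + 5*(2 * d2 (k + N0) + 2 * c (Suc (k + N0))))"
  have hpos: "h (k + N0) \<omega> > 0" if "\<omega> \<in> \<Omega>" for k \<omega> using step[of "k+N0" \<omega>] that by simp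
  have Rb: "\<bar>R k \<omega>\<bar> \<le> 5" if "\<omega> \<in> \<Omega>" for k \<omega> using step[of "k+N0" \<omega>] that by (simp add: R_def)
  have Ab: "\<bar>A k\<bar> \<le> 1" for k using ab[of "k+N0"] by (simp add: A_def)
  have Db: "\<bar>D k \<omega>\<bar> \<le> MD k" if "\<omega> \<in> \<Omega>" for k \<omega>
    using step[of "k+N0" \<omega>] that by (simp add: D_def L_def A_def R_def MD_def)
  have Ub: "\<bar>U k \<omega>\<bar> \<le> MU k" if w: "\<omega> \<in> \<Omega>" for k \<omega>
  proof -
    have n: "k + N0 \<ge> N0" by simp
    have 1: "\<bar>A k * (R k \<omega> + R (Suc k) \<omega>)\<bar> \<le> (2 * \<bar>\<gamma> (Suc (k+N0)) - \<gamma> (k+N0)\<bar> / \<gamma> (k+N0)) * (K1/\<gamma> (k+N0))"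
      by (rule absmul_le) (use ab[OF n] step[OF n w] in \<open>simp_all add: A_def R_def\<close>)
    have 2: "(2 * \<bar>\<gamma> (Suc (k+N0)) - \<gamma> (k+N0)\<bar> / \<gamma> (k+N0)) * (K1/\<gamma> (k+N0)) = 2*K1*c (k + N0)"
      by (simp add: c_def power2_eq_square)
    have 3: "\<bar>(A k - A (Suc k)) * R (Suc k) \<omega>\<bar> \<le> (2 * d2 (k + N0) + 2 * c (Suc (k + N0))) * 5"
      by (rule absmul_le) (use adiff[OF n] Rb[OF w] in \<open>simp_all add: A_def\<close>)
    show ?thesis unfolding U_def MU_def
      using 1 2 3 abs_triangle_ineq4[of "A k * (R k \<omega> + R (Suc k) \<omega>)" "(A k - A (Suc k)) * R (Suc k) \<omega>"]
      by linarith
  qed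
  have MDs: "summable MD" unfolding MD_def using cs by (intro summable_mult) (simp add: summable_iff_shift[of c N0])
  have MUs: "summable MU"
  proof -
    have "summable (\<lambda>k. c (k + N0))" using cs by (simp add: summable_iff_shift[of c N0])
    moreover have "summable (\<lambda>k. d2 (k + N0))" using d2s by (simp add: summable_iff_shift[of d2 N0])
    moreover have "summable (\<lambda>k. c (Suc (k + N0)))" using cs summable_iff_shift[of c "Suc N0"] by simp
    ultimately show ?thesis unfolding MU_def by (intro summable_add summable_mult) auto
  qed
  have MDnn: "0 \<le> MD k" for k unfolding MD_def CD_def c_def using B by simp
  have MUnn: "0 \<le> MU k" for k
  proof -
    have "0 \<le> MD k" "\<bar>U k 0\<bar> \<le> MU k" using Ub[of 0 k] B by (auto simp: \<Omega>_def MDnn)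
    thus ?thesis by linarith
  qed
  have Lid: "L n \<omega> = L 0 \<omega> + ((\<Sum>k<n. U k \<omega>) + A 0 * R 0 \<omega> - A n * R n \<omega>)/2 + (\<Sum>k<n. D k \<omega>)" for n \<omega>
  proof -
    have "L n \<omega> - L 0 \<omega> = (\<Sum>k<n. L (Suc k) \<omega> - L k \<omega>)" by (rule sum_lessThan_telescope[symmetric])
    also have "\<dots> = (\<Sum>k<n. A k * R k \<omega>) + (\<Sum>k<n. D k \<omega>)" by (simp add: D_def sum.distrib[symmetric])
    also have "(\<Sum>k<n. A k * R k \<omega>) = ((\<Sum>k<n. U k \<omega>) + A 0 * R 0 \<omega> - A n * R n \<omega>)/2"
      using abel2[of A "\<lambda>k. R k \<omega>" n] by (simp add: U_def)
    finally show ?thesis by simp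
  qed
  have ulU: "uniform_limit \<Omega> (\<lambda>n \<omega>. \<Sum>k<n. U k \<omega>) (\<lambda>\<omega>. \<Sum>k. U k \<omega>) sequentially"
    by (rule Weierstrass_m_test[OF _ MUs]) (use Ub in simp)
  have ulD: "uniform_limit \<Omega> (\<lambda>n \<omega>. \<Sum>k<n. D k \<omega>) (\<lambda>\<omega>. \<Sum>k. D k \<omega>) sequentially"
    by (rule Weierstrass_m_test[OF _ MDs]) (use Db in simp)
  have a0: "a \<longlonglongrightarrow> 0"
  proof (rule Lim_null_comparison)
    show "eventually (\<lambda>n. norm (a n) \<le> 2 * \<bar>\<gamma> (Suc n) - \<gamma> n\<bar>) sequentially"
      unfolding eventually_sequentially
    proof (intro exI allI impI)
      fix n assume n: "n \<ge> N0"
      have "2 * \<bar>\<gamma> (Suc n) - \<gamma> n\<bar> / \<gamma> n \<le> 2 * \<bar>\<gamma> (Suc n) - \<gamma> n\<bar> / 1"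
        by (rule divide_left_mono) (use N0[OF n] B in auto)
      thus "norm (a n) \<le> 2 * \<bar>\<gamma> (Suc n) - \<gamma> n\<bar>" using ab[OF n] by simp
    qed
    show "(\<lambda>n. 2 * \<bar>\<gamma> (Suc n) - \<gamma> n\<bar>) \<longlonglongrightarrow> 0"
      using tendsto_mult_right_zero[OF tendsto_rabs_zero[OF C2], of 2] by simp
  qed
  have A0: "(\<lambda>n. 5 * \<bar>A n\<bar>) \<longlonglongrightarrow> 0"
    using tendsto_mult_right_zero[OF tendsto_rabs_zero[OF LIMSEQ_ignore_initial_segment[OF a0, of N0]], of 5]
    by (simp add: A_def)
  have ulAR: "uniform_limit \<Omega> (\<lambda>n \<omega>. A n * R n \<omega>) (\<lambda>\<omega>. 0) sequentially"
  proof (rule uniform_limit_null_comparison)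
    show "\<forall>\<^sub>F n in sequentially. \<forall>\<omega>\<in>\<Omega>. norm (A n * R n \<omega>) \<le> 5 * \<bar>A n\<bar>"
      by (rule always_eventually) (auto simp: abs_mult mult.commute intro!: mult_left_mono Rb)
    show "uniform_limit \<Omega> (\<lambda>n \<omega>. 5 * \<bar>A n\<bar>) (\<lambda>\<omega>. 0) sequentially" by (rule lim0_unif[OF A0])
  qed
  define Lf where "Lf = (\<lambda>\<omega>. L 0 \<omega> + ((\<Sum>k. U k \<omega>) + A 0 * R 0 \<omega> - 0)/2 + (\<Sum>k. D k \<omega>))"
  have ulL0: "uniform_limit \<Omega> (\<lambda>n \<omega>. L 0 \<omega> + ((\<Sum>k<n. U k \<omega>) + A 0 * R 0 \<omega> - A n * R n \<omega>)/2 + (\<Sum>k<n. D k \<omega>)) Lf sequentially"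
    unfolding Lf_def by (intro uniform_limit_intros ulU ulD ulAR)
  have ulL: "uniform_limit \<Omega> L Lf sequentially"
    using ulL0 by (subst uniform_limit_cong'[where g = "\<lambda>n \<omega>. L 0 \<omega> + ((\<Sum>k<n. U k \<omega>) + A 0 * R 0 \<omega> - A n * R n \<omega>)/2 + (\<Sum>k<n. D k \<omega>)" and i = Lf]) (auto simp: Lid[symmetric])
  have cball: "\<Omega> = cball 0 B" by (auto simp: \<Omega>_def cball_def dist_real_def)
  have c1: "continuous_on \<Omega> (opoly \<gamma> N0)" "continuous_on \<Omega> (opoly \<gamma> (Suc N0))"
    using continuous_on_subset[OF conjunct1[OF opoly_cont[OF pos, where n=N0]] subset_UNIV]
      continuous_on_subset[OF conjunct2[OF opoly_cont[OF pos, where n=N0]] subset_UNIV] by auto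
  have contL0: "continuous_on \<Omega> (L 0)"
  proof -
    have nz: "\<forall>\<omega>\<in>\<Omega>. h N0 \<omega> \<noteq> 0"
    proof
      fix \<omega> assume "\<omega> \<in> \<Omega>"
      from hpos[OF this, of 0] show "h N0 \<omega> \<noteq> 0" by simp
    qed
    have "continuous_on \<Omega> (\<lambda>\<omega>. ln (\<gamma> N0 * ((opoly \<gamma> N0 \<omega>)\<^sup>2 + (opoly \<gamma> (Suc N0) \<omega>)\<^sup>2) - \<omega> * opoly \<gamma> N0 \<omega> * opoly \<gamma> (Suc N0) \<omega>))"
      by (intro continuous_intros c1) (use nz in \<open>simp add: h_def\<close>)
    thus ?thesis by (simp add: L_def h_def)
  qed
  have "compact (L 0 ` \<Omega>)" unfolding cball by (rule compact_continuous_image[OF contL0[unfolded cball] compact_cball])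
  then obtain K0 where K0: "\<And>\<omega>. \<omega> \<in> \<Omega> \<Longrightarrow> \<bar>L 0 \<omega>\<bar> \<le> K0"
    using compact_imp_bounded bounded_iff by (metis image_eqI real_norm_def)
  define K where "K = K0 + (suminf MU + 10)/2 + suminf MD"
  have Lb: "\<bar>L n \<omega>\<bar> \<le> K" if w: "\<omega> \<in> \<Omega>" for n \<omega>
  proof -
    have sU: "\<bar>\<Sum>k<n. U k \<omega>\<bar> \<le> suminf MU"
    proof -
      have "\<bar>\<Sum>k<n. U k \<omega>\<bar> \<le> (\<Sum>k<n. \<bar>U k \<omega>\<bar>)" by (rule sum_abs)
      also have "\<dots> \<le> (\<Sum>k<n. MU k)" by (rule sum_mono) (rule Ub[OF w])
      also have "\<dots> \<le> suminf MU" by (rule sum_le_suminf[OF MUs]) (auto intro: MUnn)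
      finally show ?thesis .
    qed
    have sD: "\<bar>\<Sum>k<n. D k \<omega>\<bar> \<le> suminf MD"
    proof -
      have "\<bar>\<Sum>k<n. D k \<omega>\<bar> \<le> (\<Sum>k<n. \<bar>D k \<omega>\<bar>)" by (rule sum_abs)
      also have "\<dots> \<le> (\<Sum>k<n. MD k)" by (rule sum_mono) (rule Db[OF w])
      also have "\<dots> \<le> suminf MD" by (rule sum_le_suminf[OF MDs]) (auto intro: MDnn)
      finally show ?thesis .
    qed
    have a1: "\<bar>A 0 * R 0 \<omega>\<bar> \<le> 1 * 5" by (rule absmul_le[OF Ab Rb[OF w]])
    have a2: "\<bar>A n * R n \<omega>\<bar> \<le> 1 * 5" by (rule absmul_le[OF Ab Rb[OF w]])
    show ?thesis unfolding Lid[of n] K_def by (rule lin_bound[OF sU sD a1 a2 K0[OF w]])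
  qed
  have Lb2: "-K \<le> L n \<omega> \<and> L n \<omega> \<le> K" if w: "\<omega> \<in> \<Omega>" for n \<omega>
    using abs_le_D1[OF Lb[OF w, of n]] abs_le_D2[OF Lb[OF w, of n]] by linarith
  have Lfb: "\<bar>Lf \<omega>\<bar> \<le> K" if w: "\<omega> \<in> \<Omega>" for \<omega>
  proof -
    have lim: "(\<lambda>n. L n \<omega>) \<longlonglongrightarrow> Lf \<omega>" by (rule tendsto_uniform_limitI[OF ulL w])
    have 1: "Lf \<omega> \<le> K" by (rule LIMSEQ_le_const2[OF lim]) (use Lb[OF w] in \<open>auto simp: abs_le_iff\<close>)
    have "\<forall>n. -K \<le> L n \<omega>" using Lb2[OF w] by blast
    moreover have "-K \<le> Lf \<omega>" by (rule LIMSEQ_le_const[OF lim]) (use calculation in blast)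
    ultimately show ?thesis using 1 by simp
  qed
  have ucont: "uniformly_continuous_on {-K..K} exp"
    by (rule compact_uniformly_continuous) (auto intro: continuous_on_exp continuous_on_id)
  have ulE: "uniform_limit \<Omega> (\<lambda>n \<omega>. exp (L n \<omega>)) (\<lambda>\<omega>. exp (Lf \<omega>)) sequentially"
    by (rule uniform_limit_compose_uniformly_continuous_on[OF ulL ucont])
       (use Lb2 in \<open>auto intro!: always_eventually\<close>)
  have gsh: "filterlim (\<lambda>n. \<gamma> (n + N0)) at_infinity sequentially"
    by (rule filterlim_at_top_imp_at_infinity) (use C1 filterlim_shift_iff[where f=\<gamma> and k=N0 and F=at_top] in simp)
  have ulP: "uniform_limit \<Omega> (\<lambda>n \<omega>. \<omega> * opoly \<gamma> (n+N0) \<omega> * opoly \<gamma> (Suc (n+N0)) \<omega>) (\<lambda>\<omega>. 0) sequentially"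
  proof (rule uniform_limit_null_comparison)
    show "\<forall>\<^sub>F n in sequentially. \<forall>\<omega>\<in>\<Omega>. norm (\<omega> * opoly \<gamma> (n+N0) \<omega> * opoly \<gamma> (Suc (n+N0)) \<omega>) \<le> B * exp K / \<gamma> (n + N0)"
    proof (rule always_eventually, intro allI ballI)
      fix n \<omega> assume w: "\<omega> \<in> \<Omega>"
      have "h (n+N0) \<omega> = exp (L n \<omega>)" using hpos[OF w] by (simp add: L_def)
      also have "\<dots> \<le> exp K" using Lb[OF w] by (simp add: abs_le_iff)
      finally have "B * h (n+N0) \<omega> / \<gamma> (n+N0) \<le> B * exp K / \<gamma> (n+N0)"
        using B pos[of "n+N0"] by (intro divide_right_mono mult_left_mono) auto
      thus "norm (\<omega> * opoly \<gamma> (n+N0) \<omega> * opoly \<gamma> (Suc (n+N0)) \<omega>) \<le> B * exp K / \<gamma> (n + N0)"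
        using step[of "n+N0" \<omega>] w by simp
    qed
    show "uniform_limit \<Omega> (\<lambda>n \<omega>. B * exp K / \<gamma> (n + N0)) (\<lambda>\<omega>. 0) sequentially"
      by (rule lim0_unif) (rule tendsto_divide_0[OF tendsto_const gsh])
  qed
  have ulF: "uniform_limit \<Omega> (\<lambda>n \<omega>. exp (L n \<omega>) + \<omega> * opoly \<gamma> (n+N0) \<omega> * opoly \<gamma> (Suc (n+N0)) \<omega>) (\<lambda>\<omega>. exp (Lf \<omega>) + 0) sequentially"
    by (rule uniform_limit_add[OF ulE ulP])
  have ulF': "uniform_limit \<Omega> (\<lambda>n \<omega>. \<gamma> (n+N0) * ((opoly \<gamma> (n+N0) \<omega>)\<^sup>2 + (opoly \<gamma> (Suc (n+N0)) \<omega>)\<^sup>2)) (\<lambda>\<omega>. exp (Lf \<omega>)) sequentially"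
  proof -
    have eqv: "uniform_limit \<Omega> (\<lambda>n \<omega>. \<gamma> (n+N0) * ((opoly \<gamma> (n+N0) \<omega>)\<^sup>2 + (opoly \<gamma> (Suc (n+N0)) \<omega>)\<^sup>2)) (\<lambda>\<omega>. exp (Lf \<omega>)) sequentially
       \<longleftrightarrow> uniform_limit \<Omega> (\<lambda>n \<omega>. exp (L n \<omega>) + \<omega> * opoly \<gamma> (n+N0) \<omega> * opoly \<gamma> (Suc (n+N0)) \<omega>) (\<lambda>\<omega>. exp (Lf \<omega>) + 0) sequentially"
    proof (rule uniform_limit_cong')
      fix n \<omega> assume "\<omega> \<in> \<Omega>"
      thus "\<gamma> (n+N0) * ((opoly \<gamma> (n+N0) \<omega>)\<^sup>2 + (opoly \<gamma> (Suc (n+N0)) \<omega>)\<^sup>2) = exp (L n \<omega>) + \<omega> * opoly \<gamma> (n+N0) \<omega> * opoly \<gamma> (Suc (n+N0)) \<omega>"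
        using hpos[of \<omega> n] by (simp add: L_def h_def)
    qed simp
    show ?thesis using eqv ulF by blast
  qed
  have ulFin: "uniform_limit \<Omega> (\<lambda>n \<omega>. \<gamma> n * ((opoly \<gamma> n \<omega>)\<^sup>2 + (opoly \<gamma> (Suc n) \<omega>)\<^sup>2)) (\<lambda>\<omega>. exp (Lf \<omega>)) sequentially"
    using ulF' filterlim_shift_iff[where f="\<lambda>n \<omega>. \<gamma> n * ((opoly \<gamma> n \<omega>)\<^sup>2 + (opoly \<gamma> (Suc n) \<omega>)\<^sup>2)" and k=N0] by simp
  show ?thesis
  proof (intro exI conjI allI impI)
    show "uniform_limit {\<omega>. \<bar>\<omega>\<bar> \<le> B} (\<lambda>n \<omega>. \<gamma> n * ((opoly \<gamma> n \<omega>)\<^sup>2 + (opoly \<gamma> (Suc n) \<omega>)\<^sup>2)) (\<lambda>\<omega>. exp (Lf \<omega>)) sequentially"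
      using ulFin by (simp add: \<Omega>_def)
    fix \<omega> :: real assume "\<bar>\<omega>\<bar> \<le> B"
    hence w: "\<omega> \<in> \<Omega>" by (simp add: \<Omega>_def)
    show "exp (-K) \<le> exp (Lf \<omega>)" "exp (Lf \<omega>) \<le> exp K" using Lfb[OF w] by (auto simp: abs_le_iff)
  qed
qed
theorem theorem2:
  fixes \<gamma> :: "nat \<Rightarrow> real"
  assumes pos: "\<And>n. \<gamma> n > 0"
    and C1: "filterlim \<gamma> at_top sequentially"
    and C2: "(\<lambda>n. \<gamma> (Suc n) - \<gamma> n) \<longlonglongrightarrow> 0"
    and C3: "\<exists>n0 m0. \<forall>n\<ge>n0. \<forall>m\<ge>m0. \<gamma> (n + m) > \<gamma> n"
    and C4: "\<not> summable (\<lambda>j. 1 / \<gamma> j)"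
    and C5: "\<exists>\<kappa>>1. summable (\<lambda>j. \<gamma> j powr (-\<kappa>))"
    and C6: "summable (\<lambda>n. \<bar>\<gamma> (Suc n) - \<gamma> n\<bar> / (\<gamma> n)\<^sup>2)"
    and C7: "summable (\<lambda>n. \<bar>(\<gamma> (n + 2) - \<gamma> (n + 1)) - (\<gamma> (n + 1) - \<gamma> n)\<bar> / \<gamma> n)"
  shows "(\<forall>\<omega>::real. convergent
            (\<lambda>n. \<gamma> n * ((opoly \<gamma> n \<omega>)\<^sup>2 + (opoly \<gamma> (Suc n) \<omega>)\<^sup>2)))
       \<and> (\<forall>B>0. \<exists>mB MB. 0 < mB \<and> mB < MB \<and>
            (\<forall>\<omega>::real. \<bar>\<omega>\<bar> \<le> B \<longrightarrow>
               mB \<le> lim (\<lambda>n. \<gamma> n * ((opoly \<gamma> n \<omega>)\<^sup>2 + (opoly \<gamma> (Suc n) \<omega>)\<^sup>2)) \<and>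
               lim (\<lambda>n. \<gamma> n * ((opoly \<gamma> n \<omega>)\<^sup>2 + (opoly \<gamma> (Suc n) \<omega>)\<^sup>2)) \<le> MB) \<and>
            uniform_limit {\<omega>. \<bar>\<omega>\<bar> \<le> B}
              (\<lambda>n \<omega>. \<gamma> n * ((opoly \<gamma> n \<omega>)\<^sup>2 + (opoly \<gamma> (Suc n) \<omega>)\<^sup>2))
              (\<lambda>\<omega>. lim (\<lambda>n. \<gamma> n * ((opoly \<gamma> n \<omega>)\<^sup>2 + (opoly \<gamma> (Suc n) \<omega>)\<^sup>2)))
              sequentially)"
proof -
  let ?f = "\<lambda>n \<omega>. \<gamma> n * ((opoly \<gamma> n \<omega>)\<^sup>2 + (opoly \<gamma> (Suc n) \<omega>)\<^sup>2)"
  have key: "\<exists>\<Phi> K. uniform_limit {\<omega>. \<bar>\<omega>\<bar> \<le> B} ?f \<Phi> sequentially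
     \<and> (\<forall>\<omega>. \<bar>\<omega>\<bar> \<le> B \<longrightarrow> exp (-K) \<le> \<Phi> \<omega> \<and> \<Phi> \<omega> \<le> exp K)" if "B > 0" for B
    by (rule main_B[OF pos C1 C2 C6 C7 that])
  have P1: "convergent (\<lambda>n. ?f n \<omega>)" for \<omega>
  proof -
    obtain \<Phi> K where ul: "uniform_limit {w. \<bar>w\<bar> \<le> \<bar>\<omega>\<bar> + 1} ?f \<Phi> sequentially"
      using key[OF add_nonneg_pos[OF abs_ge_zero zero_less_one, of \<omega>]] by blast
    have "(\<lambda>n. ?f n \<omega>) \<longlonglongrightarrow> \<Phi> \<omega>" by (rule tendsto_uniform_limitI[OF ul]) simp
    thus ?thesis by (auto simp: convergent_def)
  qed
  have P2: "\<exists>mB MB. 0 < mB \<and> mB < MB \<and>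
            (\<forall>\<omega>::real. \<bar>\<omega>\<bar> \<le> B \<longrightarrow> mB \<le> lim (\<lambda>n. ?f n \<omega>) \<and> lim (\<lambda>n. ?f n \<omega>) \<le> MB) \<and>
            uniform_limit {\<omega>. \<bar>\<omega>\<bar> \<le> B} ?f (\<lambda>\<omega>. lim (\<lambda>n. ?f n \<omega>)) sequentially" if B: "B > 0" for B
  proof -
    obtain \<Phi> K where ul: "uniform_limit {\<omega>. \<bar>\<omega>\<bar> \<le> B} ?f \<Phi> sequentially"
      and bd: "\<And>\<omega>. \<bar>\<omega>\<bar> \<le> B \<Longrightarrow> exp (-K) \<le> \<Phi> \<omega> \<and> \<Phi> \<omega> \<le> exp K"
      using key[OF B] by blast
    have limeq: "lim (\<lambda>n. ?f n \<omega>) = \<Phi> \<omega>" if "\<bar>\<omega>\<bar> \<le> B" for \<omega>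
      by (rule limI, rule tendsto_uniform_limitI[OF ul]) (use that in simp)
    have "exp (-K) \<le> \<Phi> 0" "\<Phi> 0 \<le> exp K" using bd[of 0] B by auto
    hence "exp (-K) \<le> exp K" by linarith
    hence lt: "exp (-K) < exp K + 1" by linarith
    show ?thesis
    proof (intro exI conjI allI impI)
      show "0 < exp (-K)" by simp
      show "exp (-K) < exp K + 1" by (rule lt)
      fix \<omega> :: real assume w: "\<bar>\<omega>\<bar> \<le> B"
      show "exp (-K) \<le> lim (\<lambda>n. ?f n \<omega>)" using bd[OF w] limeq[OF w] by simp
      show "lim (\<lambda>n. ?f n \<omega>) \<le> exp K + 1" using bd[OF w] limeq[OF w] by simp
    next
      have "uniform_limit {\<omega>. \<bar>\<omega>\<bar> \<le> B} ?f \<Phi> sequentially \<longleftrightarrow>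
            uniform_limit {\<omega>. \<bar>\<omega>\<bar> \<le> B} ?f (\<lambda>\<omega>. lim (\<lambda>n. ?f n \<omega>)) sequentially"
        by (rule uniform_limit_cong') (auto simp: limeq)
      thus "uniform_limit {\<omega>. \<bar>\<omega>\<bar> \<le> B} ?f (\<lambda>\<omega>. lim (\<lambda>n. ?f n \<omega>)) sequentially" using ul by blast
    qed
  qed
  show ?thesis using P1 P2 by blast
qed


end
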